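(* Let $p$ be a prime and $0\le\ell<p$. Then \[S_\ell^{*0}-S_\ell^*=(-1)^\ell.\]
   Context: For $u\in\mathbb{F}_p$ and $0\le\ell<p$, $S_\ell^*(u)=\{S\subseteq\mathbb{F}_p^* \mid \#S=\ell,\ \sum_{s\in S}s=u\}$, where $\mathbb{F}_p^*=\mathbb{F}_p\setminus\{0\}$ and sums are in $\mathbb{F}_p$. The cardinality $\#S_\ell^*(u)$ does not depend on $u\in\mathbb{F}_p^*$; this common value is denoted $S_\ell^*$. Also $S_\ell^{*0}:=\#S_\ell^*(0)$ (so e.g. $S_0^{*0}=1$, $S_0^*=0$). *)

theory Defs
  imports "HOL-Computational_Algebra.Primes"
begin

text \<open>We model \<open>F_p\<close> as the residues \<open>{0..<p}\<close> with arithmetic mod p,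
  and \<open>F_p^*\<close> as \<open>{1..<p}\<close>.\<close>

definition Sstar :: "nat \<Rightarrow> nat \<Rightarrow> nat \<Rightarrow> nat set set" where
  "Sstar p l u = {S. S \<subseteq> {1..<p} \<and> card S = l \<and> (\<Sum>S) mod p = u}"

end

theory Submission
  imports Defs "HOL-Number_Theory.Cong"
begin

definition Tall :: "nat \<Rightarrow> nat \<Rightarrow> nat \<Rightarrow> nat set set" where
  "Tall p l u = {S. S \<subseteq> {0..<p} \<and> card S = l \<and> (\<Sum>S) mod p = u}"

lemma Tall_finite: "finite (Tall p l u)"
  by (rule finite_subset[of _ "Pow {0..<p}"]) (auto simp: Tall_def)

lemma Sstar_finite: "finite (Sstar p l u)"
  by (rule finite_subset[of _ "Pow {0..<p}"]) (auto simp: Sstar_def)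

lemma exists_c:
  fixes p l v w :: nat
  assumes "prime p" "0 < l" "l < p"
  shows "\<exists>c. (v + l * c) mod p = w mod p"
proof -
  have "coprime l p"
  proof -
    have "\<not> p dvd l"
    proof
      assume "p dvd l"
      hence "p \<le> l" using assms(2) by (simp add: dvd_imp_le)
      thus False using assms(3) by simp
    qed
    thus ?thesis using prime_imp_coprime_nat[OF assms(1)] coprime_commute by blast
  qed
  then obtain x where x: "[l * x = Suc 0] (mod p)" using cong_solve_coprime_nat by blast
  define c where "c = x * (w + (p - 1) * v)"
  have h1: "[l * x * (w + (p - 1) * v) = Suc 0 * (w + (p - 1) * v)] (mod p)"
    using x by (rule cong_scalar_right)
  have h1': "[l * c = w + (p - 1) * v] (mod p)"
    using h1 unfolding c_def by (simp add: mult.assoc)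
  have h2: "[v + l * c = v + (w + (p - 1) * v)] (mod p)"
    by (rule cong_add[OF cong_refl h1'])
  have p0: "0 < p" using assms(1) prime_gt_0_nat by blast
  have h3: "v + (w + (p - 1) * v) = w + p * v"
    using p0 by (cases p) (simp_all add: algebra_simps)
  have h4: "[w + p * v = w] (mod p)" by (simp add: cong_def)
  have "[v + l * c = w] (mod p)" using h2 h3 h4 cong_trans by metis
  thus ?thesis unfolding cong_def by blast
qed

lemma Tall_le:
  assumes "prime p" "0 < l" "l < p" "w < p"
  shows "card (Tall p l v) \<le> card (Tall p l w)"
proof -
  obtain c where c: "(v + l * c) mod p = w mod p" using exists_c[OF assms(1-3)] by blast
  define g where "g x = (x + c) mod p" for x
  have p0: "p > 0" using assms(1) prime_gt_0_nat by blast
  have ginj: "inj_on g {0..<p}"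
    unfolding inj_on_def g_def
  proof (intro ballI impI)
    fix x y assume xy: "x \<in> {0..<p}" "y \<in> {0..<p}" "(x + c) mod p = (y + c) mod p"
    hence "[x + c = y + c] (mod p)" by (simp add: cong_def)
    hence "[x = y] (mod p)" by (simp add: cong_add_rcancel_nat)
    thus "x = y" using xy by (simp add: cong_def)
  qed
  have "card (Tall p l v) \<le> card (Tall p l w)"
  proof (rule card_inj_on_le[of "image g"])
    show "inj_on (image g) (Tall p l v)"
      using inj_on_image_Pow[OF ginj] by (rule inj_on_subset) (auto simp: Tall_def)
    show "finite (Tall p l w)" by (rule Tall_finite)
    show "image g ` Tall p l v \<subseteq> Tall p l w"
    proof
      fix T assume "T \<in> image g ` Tall p l v"
      then obtain S where S: "S \<in> Tall p l v" "T = g ` S" by blast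
      have Ssub: "S \<subseteq> {0..<p}" and cS: "card S = l" and sS: "(\<Sum>S) mod p = v"
        using S(1) by (auto simp: Tall_def)
      have inj: "inj_on g S" using ginj Ssub inj_on_subset by blast
      have "T \<subseteq> {0..<p}" using S(2) p0 by (auto simp: g_def)
      moreover have "card T = l" using S(2) card_image[OF inj] cS by simp
      moreover have "(\<Sum>T) mod p = w"
      proof -
        have "\<Sum>T = (\<Sum>x\<in>S. g x)" using S(2) sum.reindex[OF inj] by simp
        hence "(\<Sum>T) mod p = (\<Sum>x\<in>S. x + c) mod p" unfolding g_def by (simp add: mod_sum_eq)
        also have "\<dots> = (\<Sum>S + l * c) mod p" using cS by (simp add: sum.distrib)
        also have "\<dots> = ((\<Sum>S) mod p + l * c) mod p" by (simp add: mod_add_left_eq)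
        also have "\<dots> = w" using sS c assms(4) by simp
        finally show ?thesis .
      qed
      ultimately show "T \<in> Tall p l w" by (simp add: Tall_def)
    qed
  qed
  thus ?thesis .
qed

lemma Tall_split:
  assumes "0 < l" "0 < p"
  shows "card (Tall p l u) = card (Sstar p l u) + card (Sstar p (l - 1) u)"
proof -
  have eq: "Tall p l u = Sstar p l u \<union> insert 0 ` Sstar p (l - 1) u"
  proof
    show "Tall p l u \<subseteq> Sstar p l u \<union> insert 0 ` Sstar p (l - 1) u"
    proof
      fix S assume S: "S \<in> Tall p l u"
      show "S \<in> Sstar p l u \<union> insert 0 ` Sstar p (l - 1) u"
      proof (cases "0 \<in> S")
        case True
        have fin: "finite S" using S by (auto simp: Tall_def intro: finite_subset)
        have "S - {0} \<in> Sstar p (l - 1) u"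
          using S True fin by (auto simp: Tall_def Sstar_def sum_diff1_nat)
        moreover have "S = insert 0 (S - {0})" using True by blast
        ultimately show ?thesis by blast
      next
        case False
        have "S \<subseteq> {1..<p}"
        proof
          fix x assume "x \<in> S"
          moreover have "x \<noteq> 0" using \<open>0 \<notin> S\<close> \<open>x \<in> S\<close> by (cases "x = 0") simp_all
          ultimately show "x \<in> {1..<p}" using S by (auto simp: Tall_def)
        qed
        hence "S \<in> Sstar p l u" using S by (auto simp: Tall_def Sstar_def)
        thus ?thesis by blast
      qed
    qed
    show "Sstar p l u \<union> insert 0 ` Sstar p (l - 1) u \<subseteq> Tall p l u"
    proof
      fix S assume "S \<in> Sstar p l u \<union> insert 0 ` Sstar p (l - 1) u"
      thus "S \<in> Tall p l u"
      proof
        assume "S \<in> Sstar p l u" thus ?thesis by (auto simp: Tall_def Sstar_def)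
      next
        assume "S \<in> insert 0 ` Sstar p (l - 1) u"
        then obtain R where R: "R \<in> Sstar p (l - 1) u" "S = insert 0 R" by blast
        have fin: "finite R" using R(1) by (auto simp: Sstar_def intro: finite_subset)
        have "0 \<notin> R" using R(1) by (auto simp: Sstar_def)
        thus ?thesis using R fin assms by (auto simp: Tall_def Sstar_def)
      qed
    qed
  qed
  have disj: "Sstar p l u \<inter> insert 0 ` Sstar p (l - 1) u = {}"
    by (auto simp: Sstar_def)
  have inj: "inj_on (insert 0) (Sstar p (l - 1) u)"
  proof (rule inj_onI)
    fix x y assume "x \<in> Sstar p (l - 1) u" "y \<in> Sstar p (l - 1) u" "insert 0 x = insert 0 y"
    moreover have "0 \<notin> x" "0 \<notin> y" using calculation by (auto simp: Sstar_def)
    ultimately show "x = y" by (metis Diff_insert_absorb)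
  qed
  have "card (Tall p l u) = card (Sstar p l u) + card (insert 0 ` Sstar p (l - 1) u)"
    unfolding eq by (rule card_Un_disjoint[OF Sstar_finite finite_imageI[OF Sstar_finite] disj])
  thus ?thesis using card_image[OF inj] by simp
qed

theorem proposition5:
  fixes p l :: nat
  assumes "prime p" and "l < p"
  shows "\<forall>u\<in>{1..<p}. int (card (Sstar p l 0)) - int (card (Sstar p l u)) = (-1) ^ l"
proof
  fix u assume u: "u \<in> {1..<p}"
  show "int (card (Sstar p l 0)) - int (card (Sstar p l u)) = (-1) ^ l"
    using assms(2)
  proof (induction l)
    case 0
    have key: "S \<in> Sstar p 0 v \<longleftrightarrow> S = {} \<and> v = 0" for S v
    proof
      assume h: "S \<in> Sstar p 0 v"
      hence "finite S" unfolding Sstar_def using finite_subset[of S "{1..<p}"] by blast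
      hence "S = {}" using h unfolding Sstar_def by simp
      thus "S = {} \<and> v = 0" using h unfolding Sstar_def by simp
    qed (simp add: Sstar_def)
    have "Sstar p 0 0 = {{}}" using key by blast
    moreover have "Sstar p 0 u = {}" using u key by fastforce
    ultimately show ?case by simp
  next
    case (Suc l)
    have p0: "0 < p" using assms(1) prime_gt_0_nat by blast
    have "card (Tall p (Suc l) 0) = card (Tall p (Suc l) u)"
      using Tall_le[OF assms(1) _ Suc.prems, of u 0] Tall_le[OF assms(1) _ Suc.prems, of 0 u] u p0
      by simp
    hence "card (Sstar p (Suc l) 0) + card (Sstar p l 0) = card (Sstar p (Suc l) u) + card (Sstar p l u)"
      using Tall_split[of "Suc l" p] p0 by simp
    hence "int (card (Sstar p (Suc l) 0)) - int (card (Sstar p (Suc l) u))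
         = - (int (card (Sstar p l 0)) - int (card (Sstar p l u)))" by linarith
    with Suc.IH Suc.prems show ?case by simp
  qed
qed

end
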